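(* Let $u\in\mathbb{R}^m$. If there exists $b\in\mathbb{R}^p$ with $\mathcal{P}(b)\neq\emptyset$ such that $-J_{f,0}^{-1}Mg(x,u)\in\mathcal{P}(b)$ for all $x\in\mathcal{P}(b)$, and $h(x,u)\le 0$ for all $x\in\mathcal{P}(b)$, then $u$ is feasible, and there is a state $x\in\mathcal{P}(b)$ with $f(x,u)=0$ and $h(x,u)\le 0$.
   Context: Let $f:\mathbb{R}^n\times\mathbb{R}^m\to\mathbb{R}^n$ and $h:\mathbb{R}^n\times\mathbb{R}^m\to\mathbb{R}^r$ be continuous and differentiable, and suppose there are a continuously differentiable map $\psi:\mathbb{R}^n\times\mathbb{R}^m\to\mathbb{R}^q$ and constant matrices $M\in\mathbb{R}^{n\times q}$, $L\in\mathbb{R}^{r\times q}$ with $f=M\psi$ and $h=L\psi$. There is a base point $(x_0,u_0)$ with $f(x_0,u_0)=0$, $h(x_0,u_0)\le 0$, at which $J_{f,0}=\frac{\partial f}{\partial x}\big|_{(x_0,u_0)}$ is nonsingular. Let $J_{\psi,0}=\frac{\partial \psi}{\partial x}\big|_{(x_0,u_0)}\in\mathbb{R}^{q\times n}$ and $g(x,u)=\psi(x,u)-J_{\psi,0}x$. A fixed matrix $A\in\mathbb{R}^{p\times n}$ is chosen so that for every $b\in\mathbb{R}^p$ the polytope $\mathcal{P}(b)=\{x\in\mathbb{R}^n: Ax\le b\}$ is bounded (hence compact). $u$ is called feasible if there is $x$ with $f(x,u)=0$ and $h(x,u)\le 0$. Vector inequalities are componentwise. *)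

theory Defs
  imports "HOL-Analysis.Analysis"
begin

definition polytope :: "real^'n^'p \<Rightarrow> real^'p \<Rightarrow> (real^'n) set" where
  "polytope A b = {x. \<forall>i. (A *v x) $ i \<le> b $ i}"

definition feasible ::
  "((real^'n) \<times> (real^'m) \<Rightarrow> real^'n) \<Rightarrow> ((real^'n) \<times> (real^'m) \<Rightarrow> real^'r) \<Rightarrow> real^'m \<Rightarrow> bool" where
  "feasible f h u \<longleftrightarrow> (\<exists>x. f (x, u) = 0 \<and> (\<forall>i. h (x, u) $ i \<le> 0))"

end

theory Submission
  imports Defs "HOL-Analysis.Analysis"
begin

theorem lemma3:
  fixes f :: "(real^'n) \<times> (real^'m) \<Rightarrow> real^'n"
    and h :: "(real^'n) \<times> (real^'m) \<Rightarrow> real^'r"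
    and \<psi> :: "(real^'n) \<times> (real^'m) \<Rightarrow> real^'q"
    and M :: "real^'q^'n" and L :: "real^'q^'r"
    and x0 :: "real^'n" and u0 :: "real^'m"
    and Jf0 :: "real^'n^'n" and J\<psi>0 :: "real^'n^'q"
    and A :: "real^'n^'p"
    and u :: "real^'m" and b :: "real^'p"
  assumes f_cont: "continuous_on UNIV f" and f_diff: "\<And>z. f differentiable (at z)"
    and h_cont: "continuous_on UNIV h" and h_diff: "\<And>z. h differentiable (at z)"
    and \<psi>_C1: "\<exists>D. (\<forall>z. (\<psi> has_derivative blinfun_apply (D z)) (at z)) \<and> continuous_on UNIV D"
    and f_eq: "\<And>z. f z = M *v \<psi> z"
    and h_eq: "\<And>z. h z = L *v \<psi> z"
    and base_f: "f (x0, u0) = 0"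
    and base_h: "\<forall>i. h (x0, u0) $ i \<le> 0"
    and Jf0: "((\<lambda>x. f (x, u0)) has_derivative (\<lambda>v. Jf0 *v v)) (at x0)"
    and Jf0_inv: "invertible Jf0"
    and J\<psi>0: "((\<lambda>x. \<psi> (x, u0)) has_derivative (\<lambda>v. J\<psi>0 *v v)) (at x0)"
    and A_bounded: "\<And>c. bounded (polytope A c)"
    and P_ne: "polytope A b \<noteq> {}"
    and self_map: "\<forall>x\<in>polytope A b.
        - (matrix_inv Jf0 *v (M *v (\<psi> (x, u) - J\<psi>0 *v x))) \<in> polytope A b"
    and h_le: "\<forall>x\<in>polytope A b. \<forall>i. h (x, u) $ i \<le> 0"
  shows "feasible f h u \<and>
         (\<exists>x\<in>polytope A b. f (x, u) = 0 \<and> (\<forall>i. h (x, u) $ i \<le> 0))"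
proof -
  let ?P = "polytope A b"
  let ?Ji = "matrix_inv Jf0"
  have inv: "Jf0 ** ?Ji = mat 1 \<and> ?Ji ** Jf0 = mat 1"
    using Jf0_inv unfolding invertible_def matrix_inv_def by (rule someI_ex)
  obtain D where D: "\<And>z. (\<psi> has_derivative blinfun_apply (D z)) (at z)" using \<psi>_C1 by blast
  have psi_cont: "continuous_on UNIV \<psi>"
    using D has_derivative_continuous continuous_at_imp_continuous_on by blast
  have closedP: "closed ?P"
  proof -
    have "?P = (\<Inter>i. {x. (A *v x) $ i \<le> b $ i})" unfolding polytope_def by auto
    moreover have "closed {x. (A *v x) $ i \<le> b $ i}" for i
      by (intro closed_Collect_le continuous_intros)
    ultimately show ?thesis by auto
  qed
  have convP: "convex ?P"
    unfolding polytope_def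
  proof (rule convexI)
    fix x y :: "real^'n" and s t :: real
    assume x: "x \<in> {x. \<forall>i. (A *v x) $ i \<le> b $ i}" and y: "y \<in> {x. \<forall>i. (A *v x) $ i \<le> b $ i}"
      and "0 \<le> s" "0 \<le> t" "s + t = 1"
    then have st: "0 \<le> s \<and> 0 \<le> t \<and> s + t = 1" by simp
    show "s *\<^sub>R x + t *\<^sub>R y \<in> {x. \<forall>i. (A *v x) $ i \<le> b $ i}"
    proof (simp, intro allI)
      fix i
      have "(A *v (s *\<^sub>R x + t *\<^sub>R y)) $ i = s * (A *v x) $ i + t * (A *v y) $ i"
        by (simp add: matrix_vector_right_distrib matrix_vector_mult_scaleR)
      also have "\<dots> \<le> s * b $ i + t * b $ i"
        using x y st by (intro add_mono mult_left_mono) auto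
      also have "\<dots> = b $ i" using st by (metis distrib_right mult_1)
      finally show "(A *v (s *\<^sub>R x + t *\<^sub>R y)) $ i \<le> b $ i" .
    qed
  qed
  have compP: "compact ?P" using closedP A_bounded compact_eq_bounded_closed by blast
  define T where "T = (\<lambda>x. - (?Ji *v (M *v (\<psi> (x, u) - J\<psi>0 *v x))))"
  have contT: "continuous_on ?P T"
  proof -
    have c1: "continuous_on UNIV (\<lambda>x. \<psi> (x, u))"
      by (rule continuous_on_compose2[OF psi_cont]) (auto intro: continuous_intros)
    have c2: "continuous_on UNIV (\<lambda>x. \<psi> (x, u) - J\<psi>0 *v x)"
      by (intro continuous_on_diff c1 linear_continuous_on matrix_vector_mul_bounded_linear)
    have c3: "continuous_on UNIV (\<lambda>x. ?Ji *v (M *v (\<psi> (x, u) - J\<psi>0 *v x)))"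
      by (rule continuous_on_compose2[OF linear_continuous_on[OF matrix_vector_mul_bounded_linear]
            continuous_on_compose2[OF linear_continuous_on[OF matrix_vector_mul_bounded_linear] c2]]) auto
    show ?thesis unfolding T_def
      by (intro continuous_on_minus continuous_on_subset[OF c3]) auto
  qed
  have TP: "T \<in> ?P \<rightarrow> ?P" using self_map unfolding T_def by auto
  obtain x where xP: "x \<in> ?P" and fx: "T x = x"
    using brouwer[OF compP convP P_ne contT TP] by blast
  have d1: "((\<lambda>x. f (x, u0)) has_derivative (\<lambda>v. M *v (J\<psi>0 *v v))) (at x0)"
  proof -
    have "((\<lambda>x. M *v \<psi> (x, u0)) has_derivative (\<lambda>v. M *v (J\<psi>0 *v v))) (at x0)"
      using bounded_linear.has_derivative[OF matrix_vector_mul_bounded_linear J\<psi>0] .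
    then show ?thesis using f_eq by simp
  qed
  have JM: "\<And>v. Jf0 *v v = M *v (J\<psi>0 *v v)"
    using has_derivative_unique[OF Jf0 d1] by metis
  have "?Ji *v (M *v \<psi> (x, u)) = 0"
  proof -
    have "- (?Ji *v (M *v \<psi> (x, u))) + ?Ji *v (Jf0 *v x) = x"
      using fx unfolding T_def
      by (simp add: JM matrix_vector_mult_diff_distrib)
    moreover have "?Ji *v (Jf0 *v x) = x"
      using inv by (simp add: matrix_vector_mul_assoc)
    ultimately show ?thesis by simp
  qed
  then have "Jf0 *v (?Ji *v (M *v \<psi> (x, u))) = 0" by simp
  then have "M *v \<psi> (x, u) = 0" using inv by (simp add: matrix_vector_mul_assoc matrix_mul_assoc)
  then have f0: "f (x, u) = 0" using f_eq by simp
  have hx: "\<forall>i. h (x, u) $ i \<le> 0" using h_le xP by blast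
  show ?thesis unfolding feasible_def using f0 hx xP by blast
qed

end
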